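(* Let $\varphi(z)=\sum_{n=0}^{\infty}a_nz^n$ be an entire function whose zeros are all real and all of the same sign, and whose order $\rho_\varphi$ satisfies $0\le\rho_\varphi<1$. Then all zeros of both $$\varphi^o(z)=\sum_{n=0}^{\infty}a_{2n+1}z^{2n+1}\quad\text{and}\quad \varphi^e(z)=\sum_{n=0}^{\infty}a_{2n}z^{2n}$$ are purely imaginary (i.e. lie on the imaginary axis).
   Context: The order of an entire function $f$ is $\limsup_{r\to\infty}\frac{\log\log M(r)}{\log r}$, where $M(r)=\max_{|z|=r}|f(z)|$. *)

theory Defs
  imports "HOL-Analysis.Analysis"
begin

definition max_modulus :: "(complex \<Rightarrow> complex) \<Rightarrow> real \<Rightarrow> real" where
  "max_modulus f r = Sup ((\<lambda>z. norm (f z)) ` sphere 0 r)"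

definition entire_order :: "(complex \<Rightarrow> complex) \<Rightarrow> ereal" where
  "entire_order f = Limsup at_top (\<lambda>r::real. ereal (ln (ln (max_modulus f r)) / ln r))"

definition odd_part :: "(nat \<Rightarrow> complex) \<Rightarrow> complex \<Rightarrow> complex" where
  "odd_part a z = (\<Sum>n. a (2*n+1) * z ^ (2*n+1))"

definition even_part :: "(nat \<Rightarrow> complex) \<Rightarrow> complex \<Rightarrow> complex" where
  "even_part a z = (\<Sum>n. a (2*n) * z ^ (2*n))"

end

theory Submission
  imports Defs "HOL-Complex_Analysis.Complex_Analysis"
begin

definition core :: "(complex \<Rightarrow> complex) \<Rightarrow> bool" where
  "core \<phi> \<longleftrightarrow> (\<forall>z. Re z \<noteq> 0 \<longrightarrow> norm (\<phi> z) \<noteq> norm (\<phi> (-z))) \<or> (\<exists>c. \<forall>z. \<phi> z = c)"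

lemma even_odd_sums:
  assumes series: "\<And>z. (\<lambda>n. a n * z ^ n) sums \<phi> z"
  shows "even_part a z = (\<phi> z + \<phi> (-z)) / 2" "odd_part a z = (\<phi> z - \<phi> (-z)) / 2"
proof -
  have s: "(\<lambda>n. a n * z ^ n + a n * (-z) ^ n) sums (\<phi> z + \<phi> (-z))"
    using sums_add[OF series[of z] series[of "-z"]] .
  have d: "(\<lambda>n. a n * z ^ n - a n * (-z) ^ n) sums (\<phi> z - \<phi> (-z))"
    using sums_diff[OF series[of z] series[of "-z"]] .
  have sm1: "strict_mono (\<lambda>n::nat. 2*n)" by (auto simp: strict_mono_def)
  have sm2: "strict_mono (\<lambda>n::nat. 2*n+1)" by (auto simp: strict_mono_def)
  have "(\<lambda>n. (\<lambda>n. a n * z ^ n + a n * (-z) ^ n) (2*n)) sums (\<phi> z + \<phi> (-z))"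
  proof (subst sums_mono_reindex[OF sm1])
    fix n :: nat assume "n \<notin> range (\<lambda>n. 2*n)"
    then have "odd n" by (metis evenE rangeI)
    then show "a n * z ^ n + a n * (-z) ^ n = 0" by (simp add: power_minus_odd)
  qed (rule s)
  moreover have "\<And>n. (-z) ^ (2*n) = z ^ (2*n)" by (simp add: power_minus_even)
  ultimately have "(\<lambda>n. 2 * (a (2*n) * z ^ (2*n))) sums (\<phi> z + \<phi> (-z))"
    by (simp only: mult_2)
  then have "(\<lambda>n. a (2*n) * z ^ (2*n)) sums ((\<phi> z + \<phi> (-z))/2)"
    using sums_divide[of _ _ 2] by fastforce
  then show "even_part a z = (\<phi> z + \<phi> (-z)) / 2"
    unfolding even_part_def by (rule sums_unique[symmetric])
  have "(\<lambda>n. (\<lambda>n. a n * z ^ n - a n * (-z) ^ n) (2*n+1)) sums (\<phi> z - \<phi> (-z))"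
  proof (subst sums_mono_reindex[OF sm2])
    fix n :: nat assume "n \<notin> range (\<lambda>n. 2*n+1)"
    then have "even n" by (metis oddE rangeI)
    then show "a n * z ^ n - a n * (-z) ^ n = 0" by (simp add: power_minus_even)
  qed (rule d)
  moreover have "\<And>n. (-z) ^ (2*n+1) = - (z ^ (2*n+1))" by (simp add: power_minus_odd)
  ultimately have "(\<lambda>n. 2 * (a (2*n+1) * z ^ (2*n+1))) sums (\<phi> z - \<phi> (-z))"
    by (simp only: mult_2 mult_minus_right diff_minus_eq_add)
  then have "(\<lambda>n. a (2*n+1) * z ^ (2*n+1)) sums ((\<phi> z - \<phi> (-z))/2)"
    using sums_divide[of _ _ 2] by fastforce
  then show "odd_part a z = (\<phi> z - \<phi> (-z)) / 2"
    unfolding odd_part_def by (rule sums_unique[symmetric])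
qed

lemma final_step:
  assumes series: "\<And>z. (\<lambda>n. a n * z ^ n) sums \<phi> z"
    and c: "core \<phi>" and nz: "\<phi> 0 \<noteq> 0"
  shows "((\<forall>z. odd_part a z = 0 \<longrightarrow> Re z = 0) \<or> (\<forall>z. odd_part a z = 0))
       \<and> ((\<forall>z. even_part a z = 0 \<longrightarrow> Re z = 0) \<or> (\<forall>z. even_part a z = 0))"
  using c unfolding core_def
proof
  assume H: "\<forall>z. Re z \<noteq> 0 \<longrightarrow> norm (\<phi> z) \<noteq> norm (\<phi> (-z))"
  have 1: "Re z = 0" if "odd_part a z = 0" for z
  proof -
    have "\<phi> z = \<phi> (-z)" using that even_odd_sums[OF series, of z] by simp
    then show ?thesis using H by metis
  qed
  have 2: "Re z = 0" if "even_part a z = 0" for z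
  proof -
    have "\<phi> z = - \<phi> (-z)" using that even_odd_sums[OF series, of z] by (simp add: add_eq_0_iff)
    then have "norm (\<phi> z) = norm (\<phi> (-z))" by simp
    then show ?thesis using H by metis
  qed
  show ?thesis using 1 2 by blast
next
  assume "\<exists>c. \<forall>z. \<phi> z = c"
  then obtain c where c: "\<And>z. \<phi> z = c" by blast
  then have "c \<noteq> 0" using nz by metis
  have "odd_part a z = 0" for z using even_odd_sums[OF series, of z] c by simp
  moreover have "even_part a z \<noteq> 0" for z using even_odd_sums[OF series, of z] c \<open>c\<noteq>0\<close> by simp
  ultimately show ?thesis by blast
qed


lemma norm_le_max_modulus:
  assumes "continuous_on UNIV \<phi>"
  shows "norm (\<phi> z) \<le> max_modulus \<phi> (norm z)"
proof -
  have "compact ((\<lambda>z. norm (\<phi> z)) ` sphere 0 (norm z))"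
    by (intro compact_continuous_image continuous_intros continuous_on_subset[OF assms]) auto
  then have "bdd_above ((\<lambda>z. norm (\<phi> z)) ` sphere 0 (norm z))"
    by (meson bounded_imp_bdd_above compact_imp_bounded)
  then show ?thesis unfolding max_modulus_def by (intro cSUP_upper) auto
qed

lemma growth_from_order:
  assumes entire: "\<phi> holomorphic_on UNIV" and ord: "entire_order \<phi> < 1"
  obtains \<sigma> C where "0 < \<sigma>" "\<sigma> < 1" "\<And>z. norm (\<phi> z) \<le> exp (C + norm z powr \<sigma>)"
proof -
  have cont: "continuous_on UNIV \<phi>" using entire holomorphic_on_imp_continuous_on by blast
  obtain s where s: "entire_order \<phi> < ereal s" "ereal s < 1" using ereal_dense2[OF ord] by blast
  define \<sigma> where "\<sigma> = max s (1/2)"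
  have \<sigma>: "0 < \<sigma>" "\<sigma> < 1" using s by (auto simp: \<sigma>_def)
  have "entire_order \<phi> < ereal \<sigma>" using s(1) by (auto simp: \<sigma>_def intro: less_le_trans)
  then have "eventually (\<lambda>r. ereal (ln (ln (max_modulus \<phi> r)) / ln r) < ereal \<sigma>) at_top"
    unfolding entire_order_def by (rule Limsup_lessD)
  then obtain R1 where R1: "\<And>r. r \<ge> R1 \<Longrightarrow> ln (ln (max_modulus \<phi> r)) / ln r < \<sigma>"
    by (auto simp: eventually_at_top_linorder)
  define R2 where "R2 = max R1 3"
  have big: "norm (\<phi> z) \<le> exp (norm z powr \<sigma>)" if "norm z \<ge> R2" for z
  proof -
    define r where "r = norm z"
    have r: "r \<ge> R1" "r \<ge> 3" using that by (auto simp: r_def R2_def)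
    have lnr: "ln r > 0" using r by simp
    have le: "norm (\<phi> z) \<le> max_modulus \<phi> r" unfolding r_def by (rule norm_le_max_modulus[OF cont])
    have "max_modulus \<phi> r \<le> exp (r powr \<sigma>)"
    proof (cases "max_modulus \<phi> r \<le> 1")
      case True
      then show ?thesis by (smt (verit) one_le_exp_iff powr_ge_zero)
    next
      case False
      then have lm: "ln (max_modulus \<phi> r) > 0" by simp
      have "ln (ln (max_modulus \<phi> r)) < \<sigma> * ln r"
        using R1[OF r(1)] lnr by (simp add: divide_less_eq)
      then have "exp (ln (ln (max_modulus \<phi> r))) < exp (\<sigma> * ln r)" by simp
      then have "ln (max_modulus \<phi> r) < r powr \<sigma>"
        using lm r by (simp add: powr_def mult.commute)
      then show ?thesis using False
        by (metis exp_ln less_eq_real_def exp_less_cancel_iff not_le zero_less_one order_le_less_trans exp_gt_zero)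
    qed
    then show ?thesis using le r_def by simp
  qed
  have "compact ((\<lambda>z. norm (\<phi> z)) ` cball 0 R2)"
    by (intro compact_continuous_image continuous_intros continuous_on_subset[OF cont]) auto
  then obtain B where B: "\<And>z. z \<in> cball 0 R2 \<Longrightarrow> norm (\<phi> z) \<le> B"
    using compact_imp_bounded by (force simp: bounded_iff)
  define C where "C = ln (max B 1)"
  have "norm (\<phi> z) \<le> exp (C + norm z powr \<sigma>)" for z
  proof (cases "norm z \<ge> R2")
    case True
    then show ?thesis using big[OF True] C_def
      by (smt (verit) exp_le_cancel_iff ln_ge_zero)
  next
    case False
    then have "norm (\<phi> z) \<le> B" using B by auto
    also have "B \<le> exp C" unfolding C_def by simp
    also have "exp C \<le> exp (C + norm z powr \<sigma>)" by simp
    finally show ?thesis .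
  qed
  then show ?thesis using \<sigma> that by blast
qed


lemma norm_lt_if_Re_lt:
  fixes w :: complex and A :: real
  assumes "Re w < 2*A" "A > 0"
  shows "norm w < norm (of_real (4*A) - w)"
proof -
  have "norm w ^ 2 < norm (of_real (4*A) - w) ^ 2"
    using assms unfolding cmod_power2 by (simp add: power2_eq_square algebra_simps)
  then show ?thesis by (meson norm_ge_zero power_less_imp_less_base)
qed

lemma borel_car:
  fixes L :: "complex \<Rightarrow> complex"
  assumes hol: "L holomorphic_on UNIV" and R: "R > 0" and A: "A > 0"
    and bnd: "\<And>w. norm w = R \<Longrightarrow> Re (L w - L 0) \<le> A" and z: "norm z < R"
  shows "norm (L z - L 0) \<le> 4*A*norm z / (R - norm z)"
proof -
  define f where "f = (\<lambda>w. L w - L 0)"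
  have fhol: "f holomorphic_on UNIV" unfolding f_def by (intro holomorphic_intros hol)
  have fle: "Re (f w) \<le> A" if "w \<in> cball 0 R" for w
  proof (rule maximum_real_frontier[where S = "cball 0 R" and f = f])
    show "f holomorphic_on interior (cball 0 R)" using fhol by (rule holomorphic_on_subset) auto
    show "continuous_on (closure (cball 0 R)) f"
      using fhol holomorphic_on_imp_continuous_on continuous_on_subset by blast
    show "Re (f v) \<le> A" if "v \<in> frontier (cball 0 R)" for v
      using that R bnd unfolding f_def by (simp add: frontier_cball)
  qed (use that in auto)
  define g where "g = (\<lambda>u. f (of_real R * u) / (of_real (4*A) - f (of_real R * u)))"
  have den: "of_real (4*A) - f (of_real R * u) \<noteq> 0" if "u \<in> ball 0 1" for u
  proof -
    have "of_real R * u \<in> cball 0 R" using that R by (auto simp: norm_mult)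
    then have "Re (f (of_real R * u)) \<le> A" by (rule fle)
    then have "Re (of_real (4*A) - f (of_real R * u)) > 0" using A by simp
    then show ?thesis by (metis zero_complex.sel(1) less_irrefl)
  qed
  have gnorm: "norm (g u) < 1" if "norm u < 1" for u
  proof -
    have "of_real R * u \<in> cball 0 R" using that R by (auto simp: norm_mult)
    then have "Re (f (of_real R * u)) < 2*A" using fle A by fastforce
    then have "norm (f (of_real R * u)) < norm (of_real (4*A) - f (of_real R * u))"
      using A by (rule norm_lt_if_Re_lt)
    then show ?thesis unfolding g_def by (simp add: norm_divide divide_less_eq_1)
  qed
  have ghol: "g holomorphic_on ball 0 1"
    unfolding g_def
    by (intro holomorphic_intros holomorphic_on_compose_gen[OF _ fhol, unfolded o_def] den) auto
  have g0: "g 0 = 0" by (simp add: g_def f_def)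
  define u where "u = z / of_real R"
  have u: "norm u < 1" using z R by (simp add: u_def norm_divide)
  have gu: "norm (g u) \<le> norm u"
    using Schwarz_Lemma(1)[of g u] ghol g0 gnorm u by blast
  have Ru: "of_real R * u = z" using R by (simp add: u_def)
  have d: "of_real (4*A) - f z \<noteq> 0" using den[of u] u Ru by simp
  have eq: "f z * (1 + g u) = of_real (4*A) * g u"
    using d unfolding g_def Ru by (simp add: field_simps)
  have n1: "norm (1 + g u) \<ge> 1 - norm u"
    using gu norm_triangle_ineq2[of 1 "- g u"] by (smt (verit) norm_minus_cancel norm_one diff_minus_eq_add)
  have pos: "1 - norm u > 0" using u by simp
  have "norm (f z) * (1 - norm u) \<le> norm (f z) * norm (1 + g u)"
    using n1 by (simp add: mult_left_mono)
  also have "\<dots> = 4*A * norm (g u)" using eq A by (metis norm_mult norm_of_real abs_of_pos mult_pos_pos zero_less_numeral)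
  also have "\<dots> \<le> 4*A * norm u" using gu A by simp
  finally have "norm (f z) \<le> 4*A*norm u / (1 - norm u)" using pos by (simp add: le_divide_eq)
  also have "4*A*norm u / (1 - norm u) = 4*A*norm z / (R - norm z)"
    using R z by (simp add: u_def norm_divide field_simps)
  finally show ?thesis by (simp add: f_def)
qed

lemma entire_zero_free_const:
  fixes h :: "complex \<Rightarrow> complex"
  assumes hol: "h holomorphic_on UNIV" and nz: "\<And>z. h z \<noteq> 0"
    and gr: "\<And>e R0. e > 0 \<Longrightarrow> \<exists>R\<ge>R0. \<forall>z. norm z = R \<longrightarrow> norm (h z) \<le> exp (e*R)"
  shows "h z = h 0"
proof -
  obtain L where Lhol: "L holomorphic_on UNIV" and L: "\<And>x. exp (L x) = h x"
    using holomorphic_logarithm_exists[of UNIV h 0] hol nz by auto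
  have small: "norm (L z - L 0) \<le> 16 * e * norm z" if e: "e > 0" for e
  proof -
    obtain R where R: "R \<ge> 2 * norm z + 1 + norm (L 0) / e" and
      Rb: "\<And>w. norm w = R \<Longrightarrow> norm (h w) \<le> exp (e*R)"
      using gr[OF e] by blast
    have Rpos: "R > 0" using R e by (smt (verit) divide_nonneg_pos norm_ge_zero)
    have eR: "e * R \<ge> norm (L 0)" using R e by (smt (verit) divide_le_eq mult.commute norm_ge_zero mult_left_mono)
    define A where "A = 2 * e * R"
    have A: "A > 0" using e Rpos by (simp add: A_def)
    have bnd: "Re (L w - L 0) \<le> A" if "norm w = R" for w
    proof -
      have "exp (Re (L w)) = norm (h w)" using L[of w] by (metis norm_exp_eq_Re)
      also have "\<dots> \<le> exp (e*R)" using Rb[OF that] .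
      finally have "Re (L w) \<le> e * R" by simp
      moreover have "- Re (L 0) \<le> norm (L 0)" using abs_Re_le_cmod[of "L 0"] by linarith
      ultimately show ?thesis using eR by (simp add: A_def)
    qed
    have R2: "2 * norm z + 1 \<le> R" using R e by (smt (verit) divide_nonneg_pos norm_ge_zero)
    then have zR: "norm z < R" by (smt (verit) norm_ge_zero)
    have "norm (L z - L 0) \<le> 4*A*norm z / (R - norm z)"
      by (rule borel_car[OF Lhol Rpos A bnd zR])
    also have "\<dots> \<le> 4*A*norm z / (R/2)"
      using R2 A zR Rpos by (intro divide_left_mono mult_nonneg_nonneg mult_pos_pos) auto
    also have "\<dots> = 16 * e * norm z" using Rpos by (simp add: A_def field_simps)
    finally show ?thesis .
  qed
  have "norm (L z - L 0) \<le> 0"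
  proof (rule field_le_epsilon)
    fix e :: real assume e: "e > 0"
    have nz1: "norm z + 1 > 0" by (smt (verit) norm_ge_zero)
    have "norm (L z - L 0) \<le> 16 * (e / (16 * (norm z + 1))) * norm z"
    proof -
      have "e / (16 * (norm z + 1)) > 0" using e by (intro divide_pos_pos) (auto, smt (verit) norm_ge_zero)
      from small[OF this] show ?thesis by simp
    qed
    also have "\<dots> = e * (norm z / (norm z + 1))"
      using nz1 by (simp add: field_simps)
    also have "\<dots> \<le> e * 1"
      using e nz1 by (intro mult_left_mono) (auto simp: divide_le_eq)
    also have "\<dots> = e" by simp
    finally show "norm (L z - L 0) \<le> 0 + e" by simp
  qed
  then have "L z = L 0" by simp
  then show ?thesis using L by metis
qed


lemma factor_by:
  fixes \<phi> F :: "complex \<Rightarrow> complex"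
  assumes h\<phi>: "\<phi> holomorphic_on UNIV" and hF: "F holomorphic_on UNIV"
    and zeq: "\<And>z. F z = 0 \<longleftrightarrow> \<phi> z = 0"
    and ord: "\<And>z. \<phi> z = 0 \<Longrightarrow> zorder F z = zorder \<phi> z"
  obtains H where "H holomorphic_on UNIV" "\<And>z. H z \<noteq> 0" "\<And>z. \<phi> z = H z * F z"
proof -
  have ana: "f analytic_on {z}" if "f holomorphic_on UNIV" for f :: "complex \<Rightarrow> complex" and z
    using that by (meson analytic_on_open open_UNIV analytic_on_subset subset_UNIV)
  have "zorder F z = zorder \<phi> z" for z
  proof (cases "\<phi> z = 0")
    case True then show ?thesis using ord by blast
  next
    case False
    then have "F z \<noteq> 0" using zeq by blast
    then show ?thesis using False zorder_eq_0I ana hF h\<phi> by metis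
  qed
  then obtain H where "H holomorphic_on UNIV" "\<And>z. H z \<noteq> 0" "\<And>z. \<phi> z = H z * F z"
    using holomorphic_zorder_factorization[of \<phi> UNIV F] h\<phi> hF zeq by auto
  then show ?thesis using that by blast
qed

lemma zeros_sequence:
  fixes \<phi> :: "complex \<Rightarrow> complex"
  assumes hol: "\<phi> holomorphic_on UNIV" and nz: "\<phi> 0 \<noteq> 0" and inf: "infinite {z. \<phi> z = 0}"
  obtains a :: "nat \<Rightarrow> complex" where "mono (norm \<circ> a)" "range a = {z. \<phi> z = 0}"
    "filterlim a at_infinity at_top"
    "\<And>z. \<phi> z = 0 \<Longrightarrow> finite (a -` {z}) \<and> int (card (a -` {z})) = zorder \<phi> z"
proof -
  define Z where "Z = {z. \<phi> z = 0}"
  have cont: "continuous_on UNIV \<phi>" using hol holomorphic_on_imp_continuous_on by blast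
  have closed: "closed Z" unfolding Z_def by (rule closed_Collect_eq[OF cont]) auto
  obtain w where w: "\<phi> w = 0" using inf by (metis (mono_tags, lifting) empty_Collect_eq finite.emptyI)
  have nconst: "\<not> \<phi> constant_on UNIV"
    using w nz unfolding constant_on_def by (metis UNIV_I)
  have fin: "finite (Z \<inter> cball 0 r)" for r
  proof -
    have "finite {z \<in> cball 0 r. \<phi> z = 0}"
      by (rule holomorphic_compact_finite_zeros[OF hol]) (use nconst in auto)
    moreover have "Z \<inter> cball 0 r = {z \<in> cball 0 r. \<phi> z = 0}" by (auto simp: Z_def)
    ultimately show ?thesis by simp
  qed
  have pos: "zorder \<phi> z > 0" if "z \<in> Z" for z
  proof -
    have "eventually (\<lambda>w. \<phi> w \<noteq> 0 \<and> w \<in> UNIV) (at z)"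
      by (rule non_zero_neighbour_alt[OF hol]) (use nz in auto)
    then have "frequently (\<lambda>w. \<phi> w \<noteq> 0) (at z)"
      by (intro eventually_frequently) (auto elim: eventually_mono)
    then show ?thesis using zorder_pos_iff[OF hol] that by (auto simp: Z_def)
  qed
  obtain a :: "nat \<Rightarrow> complex" where a: "mono (norm \<circ> a)" "range a = Z" "filterlim a at_infinity at_top"
    "\<And>z. z \<in> Z \<Longrightarrow> finite (a -` {z}) \<and> card (a -` {z}) = nat (zorder \<phi> z)"
    using sequence_of_sparse_set_exists'[of Z "\<lambda>z. nat (zorder \<phi> z)"] inf closed fin pos
    unfolding Z_def by (auto simp: Z_def)
  show ?thesis
  proof (rule that[OF a(1) _ a(3)])
    show "range a = {z. \<phi> z = 0}" using a(2) Z_def by simp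
    fix z assume "\<phi> z = 0"
    then have "z \<in> Z" by (simp add: Z_def)
    then show "finite (a -` {z}) \<and> int (card (a -` {z})) = zorder \<phi> z"
      using a(4) pos by force
  qed
qed


lemma counting:
  fixes \<phi> :: "complex \<Rightarrow> complex" and a :: "nat \<Rightarrow> complex"
  assumes hol: "\<phi> holomorphic_on UNIV" and nz: "\<phi> 0 \<noteq> 0"
    and mono: "mono (norm \<circ> a)" and ran: "range a = {z. \<phi> z = 0}"
    and lim: "filterlim a at_infinity at_top"
    and mult: "\<And>z. \<phi> z = 0 \<Longrightarrow> finite (a -` {z}) \<and> int (card (a -` {z})) = zorder \<phi> z"
    and growth: "\<And>z. norm (\<phi> z) \<le> exp (C + norm z powr \<sigma>)"
    and N: "N > 0"
  shows "2^N * norm (\<phi> 0) \<le> exp (C + (3 * norm (a (N-1))) powr \<sigma>)"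
proof -
  have anz: "a n \<noteq> 0" for n
  proof -
    have "a n \<in> range a" by simp
    then have "\<phi> (a n) = 0" using ran by auto
    then show ?thesis using nz by metis
  qed
  interpret W: weierstrass_product' a
  proof
    show "\<And>z. z \<in> range a \<Longrightarrow> finite (a -` {z})" using mult ran by auto
  qed (use anz lim in auto)
  have Wz: "zorder W.f z = zorder \<phi> z" if "\<phi> z = 0" for z
    using W.zorder[of z] mult[OF that] by simp
  obtain H where Hhol: "H holomorphic_on UNIV" and Hnz: "\<And>z. H z \<noteq> 0"
    and HW: "\<And>z. \<phi> z = H z * W.f z"
    using factor_by[OF hol W.holomorphic[of UNIV]] W.zero ran Wz by blast
  interpret V: weierstrass_product "\<lambda>n. a (n+N)" "\<lambda>n. n+N"
  proof
    show "filterlim (\<lambda>n. a (n + N)) at_infinity at_top"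
      by (rule filterlim_compose[OF lim filterlim_add_const_nat_at_top])
    fix r :: real assume "r > 0"
    from summable_ignore_initial_segment[OF W.summable_a_p[OF this], of N]
    show "summable (\<lambda>n. (r / norm (a (n + N))) ^ Suc (n + N))" .
  qed (use anz in auto)
  define E where "E = (\<lambda>z. \<Prod>i<N. exp (\<Sum>k=1..i. (z / a i) ^ k / of_nat k))"
  define Q where "Q = (\<lambda>z. \<Prod>i<N. (1 - z / a i))"
  define G where "G = (\<lambda>z. H z * V.f z * E z)"
  have Ghol: "G holomorphic_on UNIV"
    unfolding G_def E_def by (intro holomorphic_intros Hhol V.holomorphic) (auto simp: anz)
  have fac: "\<phi> z = G z * Q z" if zn: "\<And>i. i < N \<Longrightarrow> z \<noteq> a i" for z
  proof -
    have nz': "weierstrass_factor i (z / a i) \<noteq> 0" if "i < N" for i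
      using zn[OF that] anz[of i] by (auto simp: field_simps)
    have "(\<lambda>i. weierstrass_factor i (z / a i)) has_prod (V.f z * (\<Prod>i<N. weierstrass_factor i (z / a i)))"
      using has_prod_iff_shift[of N "\<lambda>i. weierstrass_factor i (z / a i)" "V.f z"] nz' V.has_prod[of z]
      by simp
    then have "W.f z = V.f z * (\<Prod>i<N. weierstrass_factor i (z / a i))"
      using W.has_prod[of z] has_prod_unique2 by blast
    also have "(\<Prod>i<N. weierstrass_factor i (z / a i)) = Q z * E z"
      unfolding Q_def E_def weierstrass_factor_def by (simp add: prod.distrib)
    finally show ?thesis using HW[of z] by (simp add: G_def mult_ac)
  qed
  have V0: "V.f 0 = 1"
  proof -
    have "(\<lambda>n. weierstrass_factor (n+N) (0 / a (n+N))) has_prod V.f 0" by (rule V.has_prod)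
    then have "(\<lambda>n. 1) has_prod V.f 0" by simp
    then show ?thesis using has_prod_one has_prod_unique2 by metis
  qed
  have W0: "W.f 0 = 1"
  proof -
    have "(\<lambda>n. weierstrass_factor n (0 / a n)) has_prod W.f 0" by (rule W.has_prod)
    then have "(\<lambda>n. 1) has_prod W.f 0" by simp
    then show ?thesis using has_prod_one has_prod_unique2 by metis
  qed
  have E0: "E 0 = 1" unfolding E_def
    by (intro prod.neutral ballI) (auto simp: power_0_left intro!: sum.neutral)
  have G0: "G 0 = \<phi> 0" using HW[of 0] W0 V0 E0 by (simp add: G_def)
  define \<rho> where "\<rho> = 3 * norm (a (N-1))"
  have aN: "norm (a (N-1)) > 0" using anz by simp
  have ai: "norm (a i) \<le> norm (a (N-1))" if "i < N" for i
    using mono that unfolding mono_def o_def by (metis Suc_pred' N less_Suc_eq_le)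
  have bound: "norm (G z) \<le> exp (C + \<rho> powr \<sigma>) / 2^N" if "z \<in> frontier (cball 0 \<rho>)" for z
  proof -
    have zr: "norm z = \<rho>" using that aN by (simp add: \<rho>_def)
    have f2: "norm (1 - z / a i) \<ge> 2" if "i < N" for i
    proof -
      have "norm (z / a i) = \<rho> / norm (a i)" using zr by (simp add: norm_divide)
      also have "\<dots> \<ge> 3" using ai[OF that] anz[of i] aN unfolding \<rho>_def
        by (simp add: le_divide_eq)
      finally have "norm (z / a i) \<ge> 3" .
      moreover have "norm (z / a i) \<le> norm (1 - z / a i) + 1"
      proof -
        have "norm (z / a i) = norm (1 - (1 - z / a i))" by simp
        also have "\<dots> \<le> norm (1::complex) + norm (1 - z / a i)" by (rule norm_triangle_ineq4)
        finally show ?thesis by simp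
      qed
      ultimately show ?thesis by simp
    qed
    have "(2::real)^N = (\<Prod>i<N. 2)" by simp
    also have "\<dots> \<le> (\<Prod>i<N. norm (1 - z / a i))"
      by (intro prod_mono) (use f2 in auto)
    also have "\<dots> = norm (Q z)" by (simp add: Q_def prod_norm)
    finally have Q2: "norm (Q z) \<ge> 2^N" .
    have zn: "z \<noteq> a i" if "i < N" for i
      using ai[OF that] zr aN unfolding \<rho>_def by auto
    have "norm (G z) * 2^N \<le> norm (G z) * norm (Q z)"
      using Q2 by (simp add: mult_left_mono)
    also have "\<dots> = norm (\<phi> z)" using fac[OF zn] by (simp add: norm_mult)
    also have "\<dots> \<le> exp (C + \<rho> powr \<sigma>)" using growth[of z] zr by simp
    finally show ?thesis by (simp add: le_divide_eq)
  qed
  have "norm (G 0) \<le> exp (C + \<rho> powr \<sigma>) / 2^N"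
  proof (rule maximum_modulus_frontier[where S = "cball 0 \<rho>" and f = G])
    show "G holomorphic_on interior (cball 0 \<rho>)" using Ghol by (rule holomorphic_on_subset) auto
    show "continuous_on (closure (cball 0 \<rho>)) G"
      using Ghol holomorphic_on_imp_continuous_on continuous_on_subset by blast
  qed (use bound aN \<rho>_def in auto)
  then show ?thesis using G0 by (simp add: \<rho>_def le_divide_eq mult.commute)
qed


lemma pigeon:
  fixes r :: "nat \<Rightarrow> real" and K :: nat and T :: real
  assumes T: "T > 0"
  shows "\<exists>R. T \<le> R \<and> R \<le> 2*T \<and> (\<forall>n<K. \<bar>R - r n\<bar> \<ge> T / (4*K+4))"
proof (rule ccontr)
  assume H: "\<not> ?thesis"
  define \<delta> where "\<delta> = T / (4*K+4)"
  define c where "c = (\<lambda>j::nat. T + j * (T / (2*K+2)))"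
  have cin: "T \<le> c j \<and> c j \<le> 2*T" if "j \<le> 2*K+1" for j
  proof -
    have "real j * (T / (2*K+2)) \<le> (2*K+2) * (T / (2*K+2))"
      using that T by (intro mult_right_mono) auto
    also have "\<dots> = T" by simp
    finally show ?thesis using T by (simp add: c_def)
  qed
  have ex: "\<exists>n<K. \<bar>c j - r n\<bar> < \<delta>" if "j \<le> 2*K+1" for j
    using H cin[OF that] unfolding \<delta>_def by (meson not_le)
  define g where "g = (\<lambda>j. SOME n. n < K \<and> \<bar>c j - r n\<bar> < \<delta>)"
  have g: "g j < K \<and> \<bar>c j - r (g j)\<bar> < \<delta>" if "j \<le> 2*K+1" for j
    unfolding g_def using someI_ex[OF ex[OF that]] .
  have inj: "inj_on g {..2*K+1}"
  proof (rule inj_onI)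
    fix i j assume i: "i \<in> {..2*K+1}" and j: "j \<in> {..2*K+1}" and e: "g i = g j"
    have "\<bar>c i - c j\<bar> < 2*\<delta>" using g[of i] g[of j] i j e by auto
    moreover have "\<bar>c i - c j\<bar> = \<bar>real i - real j\<bar> * (T / (2*K+2))"
    proof -
      have "c i - c j = (real i - real j) * (T / (2*K+2))" unfolding c_def by (simp add: left_diff_distrib diff_divide_distrib)
      moreover have "T / (2*K+2) > 0" using T by simp
      ultimately show ?thesis using T by (simp add: abs_mult)
    qed
    moreover have "2*\<delta> = T / (2*K+2)" by (simp add: \<delta>_def field_simps)
    ultimately have "\<bar>real i - real j\<bar> * (T / (2*K+2)) < 1 * (T / (2*K+2))" by simp
    moreover have "T / (2*K+2) > 0" using T by simp
    ultimately have "\<bar>real i - real j\<bar> < 1"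
      using mult_less_cancel_right_pos by blast
    then show "i = j" by linarith
  qed
  have "g ` {..2*K+1} \<subseteq> {..<K}" using g by auto
  then have "card {..2*K+1} \<le> card {..<K}"
    using card_inj_on_le[OF inj] by blast
  then show False by simp
qed


lemma prod_lower:
  fixes r :: "nat \<Rightarrow> real" and K :: nat
  assumes rpos: "\<And>n. r n > 0" and summ: "summable (\<lambda>n. 1 / r n)"
    and T: "T > 0" and R: "T \<le> R" "R \<le> 2*T"
    and Kbig: "\<And>n. n \<ge> K \<Longrightarrow> r n \<ge> 4*T"
    and Ksmall: "\<And>n. n < K \<Longrightarrow> r n < 4*T"
    and sep: "\<And>n. n < K \<Longrightarrow> \<bar>R - r n\<bar> \<ge> T / (4*K+4)"
    and hp: "(\<lambda>n. \<bar>1 - R / r n\<bar>) has_prod p"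
  shows "- (K * ln (16*(K+1))) - 2*R*(\<Sum>n. 1 / r (n+K)) \<le> ln p"
proof -
  define f where "f = (\<lambda>n. \<bar>1 - R / r n\<bar>)"
  define g where "g = (\<lambda>n. if n < K then - ln (16*(K+1)) else - 2*R / r n)"
  have small_f: "f n \<ge> 1 / (16*(K+1))" if "n < K" for n
  proof -
    have "f n = \<bar>R - r n\<bar> / r n" using rpos[of n]
      by (simp add: f_def field_simps abs_div_pos[symmetric] abs_minus_commute)
    also have "\<dots> \<ge> (T / (4*K+4)) / (4*T)"
      using sep[OF that] Ksmall[OF that] rpos[of n] T
      by (intro frac_le) auto
    also have "(T / (4*K+4)) / (4*T) = 1 / (16*(K+1))"
    proof -
      have "(T / (4*K+4)) / (4*T) = (T / (4*T)) / (4*K+4)" by simp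
      also have "T / (4*T) = 1/4" using T by simp
      finally show ?thesis by simp
    qed
    finally show ?thesis .
  qed
  have big_f: "f n = 1 - R / r n" "R / r n \<le> 1/2" "0 \<le> R / r n" if "n \<ge> K" for n
  proof -
    show "R / r n \<le> 1/2" using Kbig[OF that] rpos[of n] R T by (simp add: divide_le_eq)
    show "0 \<le> R / r n" using rpos[of n] R T by simp
    then show "f n = 1 - R / r n" using \<open>R / r n \<le> 1/2\<close> by (simp add: f_def)
  qed
  have fpos: "f n > 0" for n
  proof (cases "n < K")
    case True
    have "(0::real) < 1 / (16*(K+1))" by simp
    then show ?thesis using small_f[OF True] by linarith
  next
    case False
    then have "f n = 1 - R / r n" "R / r n \<le> 1/2" using big_f[of n] by auto
    then show ?thesis by linarith
  qed
  have lsum: "(\<lambda>n. ln (f n)) sums (ln p)"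
    using has_prod_imp_sums_ln_real'[of f p] hp fpos unfolding f_def by blast
  have gle: "g n \<le> ln (f n)" for n
  proof (cases "n < K")
    case True
    have "ln (1 / (16*(K+1))) \<le> ln (f n)"
      using small_f[OF True] fpos[of n] by (subst ln_le_cancel_iff) auto
    then show ?thesis using True by (simp add: g_def ln_div)
  next
    case False
    then have nK: "n \<ge> K" by simp
    define x where "x = R / r n"
    have x: "0 \<le> x" "x \<le> 1/2" using big_f[OF nK] by (auto simp: x_def)
    have "- x - 2 * x\<^sup>2 \<le> ln (1 - x)" by (rule ln_one_minus_pos_lower_bound[OF x])
    moreover have "2 * x\<^sup>2 \<le> x"
    proof -
      have "(2*x)*x \<le> 1*x" by (rule mult_right_mono) (use x in auto)
      then show ?thesis by (simp add: power2_eq_square algebra_simps)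
    qed
    ultimately have "- 2 * x \<le> ln (1 - x)" by linarith
    then show ?thesis using False big_f[OF nK] by (simp add: g_def x_def)
  qed
  have tail: "(\<lambda>n. g (n + K)) sums (- 2*R*(\<Sum>n. 1 / r (n+K)))"
  proof -
    have "summable (\<lambda>n. 1 / r (n+K))" by (rule summable_ignore_initial_segment[OF summ])
    then have "(\<lambda>n. (- 2*R) * (1 / r (n+K))) sums ((- 2*R) * (\<Sum>n. 1 / r (n+K)))"
      by (intro sums_mult summable_sums)
    then show ?thesis by (simp add: g_def)
  qed
  have "(\<Sum>i<K. g i) = - (K * ln (16*(K+1)))" by (simp add: g_def)
  then have gs: "g sums (- 2*R*(\<Sum>n. 1 / r (n+K)) - (K * ln (16*(K+1))))"
    using tail sums_iff_shift[of g K] by simp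
  have "- 2*R*(\<Sum>n. 1 / r (n+K)) - (K * ln (16*(K+1))) \<le> ln p"
    by (rule sums_le[OF _ gs lsum]) (use gle in auto)
  then show ?thesis by simp
qed


lemma ev_lin:
  fixes A B s e :: real
  assumes s: "s < 1" and e: "e > 0"
  shows "eventually (\<lambda>T. A + B * T powr s \<le> e * T) at_top"
proof -
  have l0: "((\<lambda>T::real. T powr (-1)) \<longlongrightarrow> 0) at_top"
    by (rule tendsto_neg_powr) (auto intro: filterlim_ident)
  have l1: "((\<lambda>T::real. T powr (s-1)) \<longlongrightarrow> 0) at_top"
    by (rule tendsto_neg_powr) (use s in \<open>auto intro: filterlim_ident\<close>)
  have "((\<lambda>T. A * T powr (-1) + B * T powr (s - 1)) \<longlongrightarrow> A*0 + B*0) at_top"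
    by (intro tendsto_add tendsto_mult tendsto_const l0 l1)
  then have "eventually (\<lambda>T. A * T powr (-1) + B * T powr (s-1) < e) at_top"
    using e by (intro order_tendstoD) auto
  moreover have "eventually (\<lambda>T::real. T > 0) at_top" by (rule eventually_gt_at_top)
  ultimately show ?thesis
  proof eventually_elim
    case (elim T)
    have "A * T powr (-1) + B * T powr (s-1) = (A + B * T powr s) / T"
      using elim(2) by (simp add: powr_minus powr_diff field_simps)
    then have "(A + B * T powr s) / T < e" using elim(1) by simp
    then show ?case using elim(2) by (simp add: divide_less_eq)
  qed
qed

lemma ln_le_powr:
  fixes T d :: real
  assumes "T > 0" "d > 0"
  shows "ln T \<le> T powr d / d"
proof -
  have "ln (T powr d) \<le> T powr d - 1" using assms by (intro ln_le_minus_one) auto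
  then have "d * ln T \<le> T powr d" using assms by (simp add: ln_powr)
  then show ?thesis using assms by (simp add: le_divide_eq mult.commute)
qed

lemma ev_klogk:
  fixes A B s e :: real
  assumes s: "0 < s" "s < 1" and e: "e > 0" and AB: "A \<ge> 0" "B \<ge> 0"
  shows "eventually (\<lambda>T. (A + B*T powr s) * ln (16*((A + B*T powr s) + 1)) \<le> e*T) at_top"
proof -
  define d where "d = (1 - s)/2"
  have d: "d > 0" "s + d < 1" using s unfolding d_def by (auto simp: field_simps)
  define c where "c = A + B"
  define c' where "c' = ln (16*(c+1))"
  have c: "c \<ge> 0" "c' \<ge> 0" using AB by (auto simp: c_def c'_def)
  have ev1: "eventually (\<lambda>T. 0 + (c*c') * T powr s \<le> (e/2) * T) at_top"
    by (rule ev_lin) (use s e in auto)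
  have ev2: "eventually (\<lambda>T. 0 + (c/d) * T powr (s+d) \<le> (e/2) * T) at_top"
    by (rule ev_lin) (use d e in auto)
  have ev3: "eventually (\<lambda>T::real. T \<ge> 1) at_top" by (rule eventually_ge_at_top)
  show ?thesis using ev1 ev2 ev3
  proof eventually_elim
    case (elim T)
    have T: "T > 0" using elim(3) by simp
    define k where "k = A + B*T powr s"
    have Ts: "T powr s \<ge> 1" using elim(3) s by (intro ge_one_powr_ge_zero) auto
    have k0: "k \<ge> 0" using AB T by (simp add: k_def)
    have kle: "k \<le> c * T powr s"
      using AB Ts by (simp add: k_def c_def algebra_simps) (metis mult_left_mono mult.commute mult_1 )
    have k1: "k + 1 \<le> (c+1) * T powr s" using kle Ts by (simp add: algebra_simps)
    have "ln (16*(k+1)) \<le> ln (16*((c+1) * T powr s))"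
      using k1 k0 by (subst ln_le_cancel_iff) auto
    also have "\<dots> = c' + s * ln T"
    proof -
      have eq2: "16*((c+1) * T powr s) = (16*(c+1)) * T powr s" by (simp only: mult.assoc)
      have "ln (16*((c+1) * T powr s)) = ln ((16*(c+1)) * T powr s)" by (simp only: eq2)
      also have "\<dots> = ln (16*(c+1)) + ln (T powr s)" using T c by (intro ln_mult_pos) auto
      also have "\<dots> = c' + s * ln T" using T by (simp add: c'_def ln_powr)
      finally show ?thesis .
    qed
    also have "\<dots> \<le> c' + ln T"
      using s elim(3) by (simp add: mult_left_le_one_le)
    also have "\<dots> \<le> c' + T powr d / d" using ln_le_powr[OF T d(1)] by simp
    finally have L: "ln (16*(k+1)) \<le> c' + T powr d / d" .
    have L0: "ln (16*(k+1)) \<ge> 0" using k0 by simp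
    have "k * ln (16*(k+1)) \<le> (c * T powr s) * (c' + T powr d / d)"
      by (intro mult_mono kle L L0) (use c in auto)
    also have "\<dots> = (c*c') * T powr s + (c/d) * T powr (s+d)"
      by (simp add: powr_add algebra_simps)
    also have "\<dots> \<le> (e/2) * T + (e/2) * T" using elim(1,2) by (intro add_mono) simp_all
    also have "\<dots> = e * T" by simp
    finally show ?case by (simp add: k_def)
  qed
qed


lemma h_bound:
  fixes h P :: "complex \<Rightarrow> complex" and r q :: "real \<Rightarrow> real" and a :: "nat \<Rightarrow> complex"
    and \<sigma> C D e R0 :: real
  assumes rdef: "\<And>n. r' n = norm (a n)" and rpos: "\<And>n. r' n > 0" and mono: "mono r'"
    and rlim: "filterlim r' at_top at_top" and summ: "summable (\<lambda>n. 1 / r' n)"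
    and \<sigma>: "0 < \<sigma>" "\<sigma> < 1"
    and cnt: "\<And>n. real (Suc n) * ln 2 \<le> D + (3 * r' n) powr \<sigma>"
    and gr: "\<And>z. norm (h z * P z) \<le> exp (C + norm z powr \<sigma>)"
    and hp: "\<And>z. (\<lambda>n. 1 - z / a n) has_prod P z"
    and hq: "\<And>R. (\<lambda>n. \<bar>1 - R / r' n\<bar>) has_prod q R"
    and e: "e > 0"
  shows "\<exists>R\<ge>R0. \<forall>z. norm z = R \<longrightarrow> norm (h z) \<le> exp (e*R)"
proof -
  define D' where "D' = max D 0"
  have e12: "e/12 > 0" using e by simp
  obtain M1 where M1: "\<And>n. n \<ge> M1 \<Longrightarrow> norm (\<Sum>i. 1 / r' (i + n)) < e/12"
    using suminf_exist_split[OF e12 summ] by blast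
  have E1: "eventually (\<lambda>T. \<bar>C\<bar> + 2 powr \<sigma> * T powr \<sigma> \<le> (e/3) * T) at_top"
    by (rule ev_lin) (use \<sigma> e in auto)
  have E2: "eventually (\<lambda>T. (D'/ln 2 + (12 powr \<sigma>/ln 2) * T powr \<sigma>) *
      ln (16*((D'/ln 2 + (12 powr \<sigma>/ln 2) * T powr \<sigma>) + 1)) \<le> (e/3) * T) at_top"
    by (rule ev_klogk) (use \<sigma> e in \<open>auto simp: D'_def\<close>)
  have E3: "eventually (\<lambda>T. T \<ge> max (max R0 1) (r' M1)) at_top" by (rule eventually_ge_at_top)
  from eventually_conj[OF E1 eventually_conj[OF E2 E3]]
  obtain T where T1: "\<bar>C\<bar> + 2 powr \<sigma> * T powr \<sigma> \<le> (e/3) * T"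
    and T2: "(D'/ln 2 + (12 powr \<sigma>/ln 2) * T powr \<sigma>) *
      ln (16*((D'/ln 2 + (12 powr \<sigma>/ln 2) * T powr \<sigma>) + 1)) \<le> (e/3) * T"
    and T3: "T \<ge> max (max R0 1) (r' M1)"
    using eventually_happens'[of at_top] by (metis (no_types, lifting) trivial_limit_at_top_linorder)
  have T: "T > 0" "T \<ge> 1" "T \<ge> R0" "T \<ge> r' M1" using T3 by auto
  have exK: "\<exists>n. r' n \<ge> 4*T"
    using filterlim_at_top[THEN iffD1, OF rlim, rule_format, of "4*T"]
    by (auto simp: eventually_sequentially)
  define K where "K = (LEAST n. r' n \<ge> 4*T)"
  have Kbig: "r' n \<ge> 4*T" if "n \<ge> K" for n
  proof -
    have "r' K \<ge> 4*T" unfolding K_def by (rule LeastI_ex[OF exK])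
    moreover have "r' K \<le> r' n" using mono that by (simp add: mono_def)
    ultimately show ?thesis by simp
  qed
  have Ksmall: "r' n < 4*T" if "n < K" for n
    using not_less_Least[OF that[unfolded K_def]] by simp
  have KM: "K \<ge> M1"
  proof (rule ccontr)
    assume "\<not> K \<ge> M1"
    then have "r' K \<le> r' M1" using mono by (simp add: mono_def)
    then have "r' K < 4*T" using T by simp
    then show False using Kbig[of K] by simp
  qed
  define tl where "tl = (\<Sum>i. 1 / r' (i + K))"
  have tl0: "tl \<ge> 0" unfolding tl_def
    by (intro suminf_nonneg summable_ignore_initial_segment[OF summ]) (use rpos in \<open>auto intro: less_imp_le\<close>)
  have tl1: "tl < e/12" using M1[OF KM] tl0 by (simp add: tl_def)
  define k where "k = D'/ln 2 + (12 powr \<sigma>/ln 2) * T powr \<sigma>"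
  have k0: "k \<ge> 0" by (simp add: k_def D'_def)
  have Kle: "real K \<le> k"
  proof (cases K)
    case 0 then show ?thesis using k0 by simp
  next
    case (Suc m)
    have "real (Suc m) * ln 2 \<le> D + (3 * r' m) powr \<sigma>" by (rule cnt)
    also have "(3 * r' m) powr \<sigma> \<le> (12 * T) powr \<sigma>"
      using Ksmall[of m] Suc rpos[of m] \<sigma> by (intro powr_mono2) auto
    also have "(12 * T) powr \<sigma> = 12 powr \<sigma> * T powr \<sigma>" using T by (simp add: powr_mult)
    finally have "real K * ln 2 \<le> D' + 12 powr \<sigma> * T powr \<sigma>"
      using Suc by (simp add: D'_def)
    have "real K = (real K * ln 2) / ln 2" by simp
    also have "\<dots> \<le> (D' + 12 powr \<sigma> * T powr \<sigma>) / ln 2"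
      using \<open>real K * ln 2 \<le> D' + 12 powr \<sigma> * T powr \<sigma>\<close> by (intro divide_right_mono) auto
    also have "\<dots> = k" by (simp add: k_def add_divide_distrib)
    finally show ?thesis .
  qed
  have klog: "real K * ln (16*(real K+1)) \<le> k * ln (16*(k+1))"
    using Kle k0 by (intro mult_mono) auto
  obtain R where R: "T \<le> R" "R \<le> 2*T" and sep: "\<And>n. n < K \<Longrightarrow> \<bar>R - r' n\<bar> \<ge> T / (4*K+4)"
    using pigeon[OF T(1), of K r'] by blast
  have low: "- (K * ln (16*(K+1))) - 2*R*tl \<le> ln (q R)"
    unfolding tl_def by (rule prod_lower[OF rpos summ T(1) R Kbig Ksmall sep hq]) auto
  have fpos: "\<bar>1 - R / r' n\<bar> > 0" for n
  proof -
    have "R \<noteq> r' n"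
    proof (cases "n < K")
      case True
      have "T / (4*K+4) > 0" using T by simp
      then show ?thesis using sep[OF True] by auto
    next
      case False
      then show ?thesis using Kbig[of n] R T by auto
    qed
    then show ?thesis using rpos[of n] by (auto simp: field_simps)
  qed
  have qpos: "q R > 0" by (rule has_prod_pos[OF hq fpos])
  have expo: "C + R powr \<sigma> + (K * ln (16*(K+1))) + 2*R*tl \<le> e * R"
  proof -
    have a1: "C + R powr \<sigma> \<le> \<bar>C\<bar> + 2 powr \<sigma> * T powr \<sigma>"
    proof -
      have "R powr \<sigma> \<le> (2*T) powr \<sigma>" using R T \<sigma> by (intro powr_mono2) auto
      also have "\<dots> = 2 powr \<sigma> * T powr \<sigma>" using T by (simp add: powr_mult)
      finally show ?thesis by linarith
    qed
    have T2': "k * ln (16*(k+1)) \<le> (e/3) * T" using T2 unfolding k_def .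
    have a2': "K * ln (16*(K+1)) \<le> k * ln (16*(k+1))" using klog by (simp add: add.commute)
    have a2: "K * ln (16*(K+1)) \<le> (e/3) * T" using a2' T2' by linarith
    have a3: "2*R*tl \<le> (e/3) * T"
    proof -
      have "2*R*tl \<le> (4*T) * (e/12)"
        by (rule mult_mono) (use R tl0 tl1 T in auto)
      then show ?thesis by (simp add: mult.commute)
    qed
    have "C + R powr \<sigma> + (K * ln (16*(K+1))) + 2*R*tl \<le> e * T" using a1 a2 a3 T1 by linarith
    also have "\<dots> \<le> e * R" using R e by simp
    finally show ?thesis .
  qed
  have "norm (h z) \<le> exp (e*R)" if z: "norm z = R" for z
  proof -
    have pn: "(\<lambda>n. norm (1 - z / a n)) has_prod norm (P z)" by (rule has_prod_norm[OF hp])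
    have fle: "0 \<le> \<bar>1 - R / r' n\<bar> \<and> \<bar>1 - R / r' n\<bar> \<le> norm (1 - z / a n)" for n
    proof -
      have "norm (z / a n) = R / r' n" using z rdef[of n] by (simp add: norm_divide)
      then have "\<bar>1 - R / r' n\<bar> = \<bar>norm (1::complex) - norm (z / a n)\<bar>" by simp
      also have "\<dots> \<le> norm (1 - z / a n)" by (rule norm_triangle_ineq3)
      finally show ?thesis by simp
    qed
    have Pge: "q R \<le> norm (P z)" by (rule has_prod_le[OF hq pn fle])
    have "norm (h z) * q R \<le> norm (h z) * norm (P z)" using Pge by (simp add: mult_left_mono)
    also have "\<dots> \<le> exp (C + R powr \<sigma>)" using gr[of z] z by (simp add: norm_mult)
    finally have hz: "norm (h z) \<le> exp (C + R powr \<sigma>) / q R" using qpos by (simp add: le_divide_eq)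
    have "exp (C + R powr \<sigma>) / q R = exp (C + R powr \<sigma> - ln (q R))"
      using qpos by (simp add: exp_diff)
    also have "\<dots> \<le> exp (C + R powr \<sigma> + (K * ln (16*(K+1))) + 2*R*tl)"
      using low by simp
    also have "\<dots> \<le> exp (e * R)" using expo by simp
    finally show ?thesis using hz by simp
  qed
  then show ?thesis using R T by (intro exI[of _ R]) auto
qed


lemma summable_from_count:
  fixes r :: "nat \<Rightarrow> real" and \<sigma> D :: real
  assumes rpos: "\<And>n. r n > 0" and \<sigma>: "0 < \<sigma>" "\<sigma> < 1"
    and cnt: "\<And>n. real (Suc n) * ln 2 \<le> D + (3 * r n) powr \<sigma>"
  shows "summable (\<lambda>n. 1 / r n)"
proof -
  define \<tau> where "\<tau> = 1 / \<sigma>"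
  have \<tau>: "\<tau> > 1" "\<sigma> * \<tau> = 1" using \<sigma> by (auto simp: \<tau>_def)
  define c where "c = 3 * (ln 2 / 2) powr (-\<tau>)"
  have s1: "summable (\<lambda>n. real n powr (-\<tau>))" using \<tau> by (subst summable_real_powr_iff) auto
  have s2: "summable (\<lambda>n. c * real (n+1) powr (-\<tau>))"
    by (intro summable_mult summable_ignore_initial_segment[OF s1])
  have ev: "eventually (\<lambda>n. real (Suc n) \<ge> 2 * D / ln 2) sequentially"
  proof -
    obtain m :: nat where "real m \<ge> 2 * D / ln 2" using real_arch_simple by blast
    then show ?thesis unfolding eventually_sequentially
      by (intro exI[of _ m]) (auto intro: order_trans)
  qed
  have "eventually (\<lambda>n. norm (1 / r n) \<le> c * real (n+1) powr (-\<tau>)) sequentially"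
    using ev
  proof eventually_elim
    case (elim n)
    define y where "y = real (Suc n) * ln 2 / 2"
    have ypos: "y > 0" by (simp add: y_def)
    have "D \<le> real (Suc n) * ln 2 / 2"
      using elim by (simp add: divide_le_eq mult.commute)
    then have "y \<le> (3 * r n) powr \<sigma>" using cnt[of n] by (simp add: y_def)
    then have "y powr \<tau> \<le> ((3 * r n) powr \<sigma>) powr \<tau>"
      using ypos \<tau> by (intro powr_mono2) auto
    also have "\<dots> = 3 * r n" using rpos[of n] \<tau> by (simp add: powr_powr)
    finally have yle: "y powr \<tau> \<le> 3 * r n" .
    have ypow: "y powr \<tau> > 0" using ypos by simp
    have "norm (1 / r n) = 1 / r n" using rpos[of n] by simp
    also have "\<dots> \<le> 3 / y powr \<tau>"
      using yle ypow rpos[of n] by (simp add: divide_simps)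
    also have "y powr \<tau> = real (Suc n) powr \<tau> * (ln 2 / 2) powr \<tau>"
      unfolding y_def by (subst powr_mult[symmetric]) (auto simp: mult.assoc)
    also have "3 / (real (Suc n) powr \<tau> * (ln 2 / 2) powr \<tau>) = c * real (n+1) powr (-\<tau>)"
      by (simp add: c_def powr_minus field_simps)
    finally show ?case .
  qed
  then show ?thesis by (rule summable_comparison_test_ev[OF _ s2])
qed


lemma hadamard_inf:
  fixes \<phi> :: "complex \<Rightarrow> complex"
  assumes hol: "\<phi> holomorphic_on UNIV" and nz: "\<phi> 0 \<noteq> 0" and \<sigma>: "0 < \<sigma>" "\<sigma> < 1"
    and growth: "\<And>z. norm (\<phi> z) \<le> exp (C + norm z powr \<sigma>)"
    and inf: "infinite {z. \<phi> z = 0}"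
  obtains c a where "c \<noteq> 0" "range a = {z. \<phi> z = 0}" "\<And>z. (\<lambda>n. 1 - z / a n) has_prod (\<phi> z / c)"
proof -
  obtain a :: "nat \<Rightarrow> complex" where mono: "mono (norm \<circ> a)" and ran: "range a = {z. \<phi> z = 0}"
    and lim: "filterlim a at_infinity at_top"
    and mult: "\<And>z. \<phi> z = 0 \<Longrightarrow> finite (a -` {z}) \<and> int (card (a -` {z})) = zorder \<phi> z"
    using zeros_sequence[OF hol nz inf] by blast
  have anz: "a n \<noteq> 0" for n
  proof -
    have "a n \<in> range a" by simp
    then have "\<phi> (a n) = 0" using ran by auto
    then show ?thesis using nz by metis
  qed
  define r where "r = (\<lambda>n. norm (a n))"
  have rpos: "r n > 0" for n using anz by (simp add: r_def)
  have rmono: "mono r" using mono by (simp add: r_def mono_def)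
  have rlim: "filterlim r at_top at_top"
    using lim unfolding r_def by (simp add: filterlim_at_infinity_conv_norm_at_top)
  define D where "D = C - ln (norm (\<phi> 0))"
  have cnt: "real (Suc n) * ln 2 \<le> D + (3 * r n) powr \<sigma>" for n
  proof -
    have "2^(Suc n) * norm (\<phi> 0) \<le> exp (C + (3 * norm (a (Suc n - 1))) powr \<sigma>)"
      by (rule counting[OF hol nz mono ran lim mult growth]) auto
    then have "ln (2^(Suc n) * norm (\<phi> 0)) \<le> ln (exp (C + (3 * r n) powr \<sigma>))"
      using nz by (subst ln_le_cancel_iff) (auto simp: r_def)
    then have "ln (2^(Suc n) * norm (\<phi> 0)) \<le> C + (3 * r n) powr \<sigma>" by simp
    moreover have "ln (2^(Suc n) * norm (\<phi> 0)) = real (Suc n) * ln 2 + ln (norm (\<phi> 0))"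
      using nz by (simp add: ln_mult_pos ln_realpow algebra_simps)
    ultimately show ?thesis by (simp add: D_def)
  qed
  have summ: "summable (\<lambda>n. 1 / r n)" by (rule summable_from_count[OF rpos \<sigma> cnt])
  interpret Pp: weierstrass_product a "\<lambda>_. 0"
  proof
    fix s :: real assume "s > 0"
    have "summable (\<lambda>n. s * (1 / r n))" by (rule summable_mult[OF summ])
    then show "summable (\<lambda>n. (s / norm (a n)) ^ Suc 0)" by (simp add: r_def)
  qed (use anz lim in auto)
  interpret Pq: weierstrass_product "\<lambda>n. complex_of_real (r n)" "\<lambda>_. 0"
  proof
    show "filterlim (\<lambda>n. complex_of_real (r n)) at_infinity at_top"
      using rlim rpos by (simp add: filterlim_at_infinity_conv_norm_at_top abs_of_pos)
    fix s :: real assume "s > 0"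
    have "summable (\<lambda>n. s * (1 / r n))" by (rule summable_mult[OF summ])
    then show "summable (\<lambda>n. (s / norm (complex_of_real (r n))) ^ Suc 0)"
      using rpos by (simp add: less_imp_le)
  qed (use rpos in \<open>auto simp: less_imp_le dest: sym\<close>, metis less_irrefl rpos)
  have Pz: "zorder Pp.f z = zorder \<phi> z" if "\<phi> z = 0" for z
    using Pp.zorder[of z] mult[OF that] by simp
  obtain h where hhol: "h holomorphic_on UNIV" and hnz: "\<And>z. h z \<noteq> 0"
    and hP: "\<And>z. \<phi> z = h z * Pp.f z"
    using factor_by[OF hol Pp.holomorphic[of UNIV]] Pp.zero ran Pz by blast
  have hp: "(\<lambda>n. 1 - z / a n) has_prod Pp.f z" for z
    using Pp.has_prod[of z] by (simp add: weierstrass_factor_def)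
  have hq: "(\<lambda>n. \<bar>1 - R / r n\<bar>) has_prod norm (Pq.f (of_real R))" for R :: real
  proof -
    have "(\<lambda>n. norm (weierstrass_factor 0 (complex_of_real R / complex_of_real (r n)))) has_prod norm (Pq.f (of_real R))"
      by (rule has_prod_norm[OF Pq.has_prod])
    moreover have "norm (weierstrass_factor 0 (complex_of_real R / complex_of_real (r n))) = \<bar>1 - R / r n\<bar>" for n
    proof -
      have "weierstrass_factor 0 (complex_of_real R / complex_of_real (r n)) = complex_of_real (1 - R / r n)"
        by (simp add: weierstrass_factor_def)
      then show ?thesis by (simp only: norm_of_real)
    qed
    ultimately show ?thesis by simp
  qed
  have gr: "norm (h z * Pp.f z) \<le> exp (C + norm z powr \<sigma>)" for z
    using growth[of z] hP[of z] by simp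
  have hconst: "h z = h 0" for z
  proof (rule entire_zero_free_const[OF hhol hnz])
    fix e R0 :: real assume "e > 0"
    show "\<exists>R\<ge>R0. \<forall>z. norm z = R \<longrightarrow> norm (h z) \<le> exp (e*R)"
      by (rule h_bound[OF _ rpos rmono rlim summ \<sigma> cnt gr hp hq \<open>e > 0\<close>]) (simp add: r_def)
  qed
  show ?thesis
  proof (rule that[of "h 0" a])
    show "h 0 \<noteq> 0" by (rule hnz)
    show "range a = {z. \<phi> z = 0}" by (rule ran)
    fix z
    have "\<phi> z / h 0 = Pp.f z" using hP[of z] hconst[of z] hnz[of 0] by simp
    then show "(\<lambda>n. 1 - z / a n) has_prod (\<phi> z / h 0)" using hp[of z] by simp
  qed
qed


lemma zorder_pos_entire:
  fixes \<phi> :: "complex \<Rightarrow> complex"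
  assumes hol: "\<phi> holomorphic_on UNIV" and nz: "\<phi> 0 \<noteq> 0" and z: "\<phi> z = 0"
  shows "zorder \<phi> z > 0"
proof -
  have "eventually (\<lambda>w. \<phi> w \<noteq> 0 \<and> w \<in> UNIV) (at z)"
    by (rule non_zero_neighbour_alt[OF hol]) (use nz in auto)
  then have "frequently (\<lambda>w. \<phi> w \<noteq> 0) (at z)"
    by (intro eventually_frequently) (auto elim: eventually_mono)
  then show ?thesis using zorder_pos_iff[OF hol] z by auto
qed

lemma hadamard_fin:
  fixes \<phi> :: "complex \<Rightarrow> complex"
  assumes hol: "\<phi> holomorphic_on UNIV" and nz: "\<phi> 0 \<noteq> 0" and \<sigma>: "0 < \<sigma>" "\<sigma> < 1"
    and growth: "\<And>z. norm (\<phi> z) \<le> exp (C + norm z powr \<sigma>)"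
    and fin: "finite {z. \<phi> z = 0}"
  obtains c where "c \<noteq> 0" "\<And>z. \<phi> z = c * (\<Prod>w\<in>{z. \<phi> z = 0}. (1 - z / w) ^ nat (zorder \<phi> w))"
proof -
  define Z where "Z = {z. \<phi> z = 0}"
  define m where "m = (\<lambda>w. nat (zorder \<phi> w))"
  define P where "P = (\<lambda>z. \<Prod>w\<in>Z. (1 - z / w) ^ m w)"
  have Znz: "w \<noteq> 0" if "w \<in> Z" for w using that nz by (auto simp: Z_def)
  have finZ: "finite Z" using fin by (simp add: Z_def)
  have mpos: "m w > 0" if "w \<in> Z" for w
    using zorder_pos_entire[OF hol nz] that by (auto simp: Z_def m_def)
  have Phol: "P holomorphic_on UNIV" unfolding P_def by (intro holomorphic_intros) (use Znz in auto)
  have Pzero: "P z = 0 \<longleftrightarrow> \<phi> z = 0" for z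
  proof
    assume "P z = 0"
    then have "\<exists>w\<in>Z. (1 - z / w) ^ m w = 0" unfolding P_def by (simp only: prod_zero_iff[OF finZ])
    then obtain w where w: "w \<in> Z" "(1 - z / w) ^ m w = 0" by blast
    then have "1 - z / w = 0" by simp
    then have "z = w" using Znz[OF w(1)] by (simp add: field_simps)
    then show "\<phi> z = 0" using w(1) by (simp add: Z_def)
  next
    assume "\<phi> z = 0"
    then have "z \<in> Z" by (simp add: Z_def)
    have "(1 - z / z) ^ m z = 0" using mpos[of z] Znz[of z] \<open>z \<in> Z\<close> by simp
    then show "P z = 0" unfolding P_def using finZ \<open>z \<in> Z\<close> by (intro prod_zero) auto
  qed
  have Pord: "zorder P w = zorder \<phi> w" if "\<phi> w = 0" for w
  proof -
    have w: "w \<in> Z" using that by (simp add: Z_def)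
    define g where "g = (\<lambda>z. (-1/w) ^ m w * (\<Prod>v\<in>Z-{w}. (1 - z / v) ^ m v))"
    have "zorder P w = int (m w)"
    proof (rule zorder_eqI[where S = UNIV and g = g])
      show "g holomorphic_on UNIV" unfolding g_def by (intro holomorphic_intros) (use Znz in auto)
      have "(\<Prod>v\<in>Z-{w}. (1 - w / v) ^ m v) \<noteq> 0"
      proof
        assume "(\<Prod>v\<in>Z-{w}. (1 - w / v) ^ m v) = 0"
        then obtain v where v: "v \<in> Z-{w}" "(1 - w / v) ^ m v = 0" using finZ by auto
        then have "1 - w / v = 0" by simp
        then have "w = v" using Znz[of v] v(1) by (simp add: field_simps)
        then show False using v(1) by simp
      qed
      then show "g w \<noteq> 0" unfolding g_def using Znz[OF w] by simp
      fix x assume "x \<in> UNIV" "x \<noteq> w"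
      have "P x = (1 - x / w) ^ m w * (\<Prod>v\<in>Z-{w}. (1 - x / v) ^ m v)"
        unfolding P_def using w finZ by (simp add: prod.remove)
      also have "(1 - x / w) ^ m w = (-1/w) ^ m w * (x - w) ^ m w"
      proof -
        have "(1 - x / w) = (-1/w) * (x - w)" using Znz[OF w] by (simp add: field_simps)
        then show ?thesis by (simp only: power_mult_distrib)
      qed
      finally have "P x = (x - w) ^ m w * ((-1/w) ^ m w * (\<Prod>v\<in>Z-{w}. (1 - x / v) ^ m v))"
        by (simp only: mult_ac)
      then show "P x = g x * (x - w) powi int (m w)"
        by (simp only: g_def power_int_of_nat mult.commute)
    qed auto
    then show ?thesis using zorder_pos_entire[OF hol nz that] by (simp add: m_def)
  qed
  obtain h where hhol: "h holomorphic_on UNIV" and hnz: "\<And>z. h z \<noteq> 0"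
    and hP: "\<And>z. \<phi> z = h z * P z"
    using factor_by[OF hol Phol Pzero Pord] by blast
  define B where "B = 2 * (\<Sum>w\<in>Z. norm w) + 1"
  have Bw: "norm w \<le> B / 2" if "w \<in> Z" for w
  proof -
    have "norm w \<le> (\<Sum>w\<in>Z. norm w)" using finZ that by (intro member_le_sum) auto
    then show ?thesis by (simp add: B_def)
  qed
  have Pge: "norm (P z) \<ge> 1" if "norm z \<ge> B" for z
  proof -
    have "1 \<le> norm ((1 - z / v) ^ m v)" if v: "v \<in> Z" for v
    proof -
      have vp: "norm v > 0" using Znz[OF v] by simp
      have "norm (z / v) \<ge> 2"
      proof -
        have "2 * norm v \<le> norm z" using Bw[OF v] \<open>norm z \<ge> B\<close> by simp
        then show ?thesis using vp by (simp add: norm_divide le_divide_eq mult.commute)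
      qed
      moreover have "norm (z / v) \<le> norm (1 - z / v) + 1"
      proof -
        have "norm (z / v) = norm (1 - (1 - z / v))" by simp
        also have "\<dots> \<le> norm (1::complex) + norm (1 - z / v)" by (rule norm_triangle_ineq4)
        finally show ?thesis by simp
      qed
      ultimately have "norm (1 - z / v) \<ge> 1" by simp
      then show ?thesis by (simp add: norm_power one_le_power)
    qed
    then have "(\<Prod>v\<in>Z. (1::real)) \<le> (\<Prod>v\<in>Z. norm ((1 - z / v) ^ m v))"
      by (intro prod_mono) auto
    then show ?thesis by (simp add: P_def prod_norm)
  qed
  have hconst: "h z = h 0" for z
  proof (rule entire_zero_free_const[OF hhol hnz])
    fix e R0 :: real assume e: "e > 0"
    have "eventually (\<lambda>T. C + 1 * T powr \<sigma> \<le> e * T) at_top"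
      by (rule ev_lin) (use \<sigma> e in auto)
    moreover have "eventually (\<lambda>T. T \<ge> max R0 B) at_top" by (rule eventually_ge_at_top)
    ultimately have "eventually (\<lambda>T. C + 1 * T powr \<sigma> \<le> e * T \<and> T \<ge> max R0 B) at_top"
      by (rule eventually_conj)
    then obtain R where R1: "C + 1 * R powr \<sigma> \<le> e * R" and R2: "R \<ge> max R0 B"
      by (metis (no_types, lifting) eventually_happens' trivial_limit_at_top_linorder)
    have "norm (h z) \<le> exp (e * R)" if z: "norm z = R" for z
    proof -
      have "norm (h z) \<le> norm (h z) * norm (P z)"
        using Pge[of z] z R2 by (simp add: mult_le_cancel_left1)
      also have "\<dots> = norm (\<phi> z)" using hP[of z] by (simp add: norm_mult)
      also have "\<dots> \<le> exp (C + R powr \<sigma>)" using growth[of z] z by simp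
      also have "\<dots> \<le> exp (e * R)" using R1 by simp
      finally show ?thesis .
    qed
    then show "\<exists>R\<ge>R0. \<forall>z. norm z = R \<longrightarrow> norm (h z) \<le> exp (e*R)" using R2 by auto
  qed
  show ?thesis
  proof (rule that[of "h 0"])
    show "h 0 \<noteq> 0" by (rule hnz)
    fix z show "\<phi> z = h 0 * (\<Prod>w\<in>{z. \<phi> z = 0}. (1 - z / w) ^ nat (zorder \<phi> w))"
      using hP[of z] hconst[of z] by (simp add: P_def Z_def m_def)
  qed
qed


lemma strict_factor:
  assumes w: "w \<in> \<real>" "Re w < 0" and u: "Re u > 0"
  shows "norm (1 + u / w) < norm (1 - u / w)"
proof -
  obtain s where ws: "w = of_real s" using w(1) Reals_cases by blast
  have s: "s < 0" using w(2) ws by simp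
  define q where "q = Re u / s"
  have q: "q < 0" using s u by (simp add: q_def divide_pos_neg)
  have r: "Re (1 + u/w) = 1 + q" "Im (1 + u/w) = Im u / s" "Re (1 - u/w) = 1 - q" "Im (1 - u/w) = - (Im u / s)"
    by (simp_all add: ws q_def Re_divide_of_real Im_divide_of_real)
  have "(1+q)*(1+q) < (1-q)*(1-q)" using q by (simp add: algebra_simps)
  then have "norm (1 + u / w)^2 < norm (1 - u / w)^2"
    unfolding cmod_power2 r by (simp add: power2_eq_square)
  then show ?thesis by (meson norm_ge_zero power_less_imp_less_base)
qed

lemma core_neg:
  fixes \<phi> :: "complex \<Rightarrow> complex"
  assumes hol: "\<phi> holomorphic_on UNIV" and nz: "\<phi> 0 \<noteq> 0" and \<sigma>: "0 < \<sigma>" "\<sigma> < 1"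
    and growth: "\<And>z. norm (\<phi> z) \<le> exp (C + norm z powr \<sigma>)"
    and neg: "\<And>z. \<phi> z = 0 \<Longrightarrow> z \<in> \<real> \<and> Re z < 0"
  shows "core \<phi>"
proof -
  have nzu: "\<phi> u \<noteq> 0" if "Re u > 0" for u using neg[of u] that by auto
  have fromkey: "core \<phi>" if key: "\<And>u. Re u > 0 \<Longrightarrow> norm (\<phi> (-u)) < norm (\<phi> u)"
  proof -
    have "norm (\<phi> z) \<noteq> norm (\<phi> (-z))" if "Re z \<noteq> 0" for z
    proof (cases "Re z > 0")
      case True then show ?thesis using key[of z] by simp
    next
      case False
      then have "Re (-z) > 0" using that by simp
      then show ?thesis using key[of "-z"] by simp
    qed
    then show ?thesis unfolding core_def by blast
  qed
  show ?thesis
  proof (cases "finite {z. \<phi> z = 0}")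
    case False
    obtain c a where c: "c \<noteq> 0" and ran: "range a = {z. \<phi> z = 0}"
      and hp: "\<And>z. (\<lambda>n. 1 - z / a n) has_prod (\<phi> z / c)"
      using hadamard_inf[OF hol nz \<sigma> growth False] by blast
    have an: "a n \<in> \<real> \<and> Re (a n) < 0" for n
    proof -
      have "a n \<in> range a" by simp
      then show ?thesis using ran neg by auto
    qed
    show ?thesis
    proof (rule fromkey)
      fix u :: complex assume u: "Re u > 0"
      show "norm (\<phi> (-u)) < norm (\<phi> u)"
      proof (cases "\<phi> (-u) = 0")
        case True then show ?thesis using nzu[OF u] by simp
      next
        case False
        have h1: "(\<lambda>n. norm (1 + u / a n)) has_prod norm (\<phi> (-u) / c)"
          using has_prod_norm[OF hp[of "-u"]] by simp
        have h2: "(\<lambda>n. norm (1 - u / a n)) has_prod norm (\<phi> u / c)"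
          using has_prod_norm[OF hp[of u]] by simp
        have fnz: "1 + u / a n \<noteq> 0" for n
        proof
          assume "1 + u / a n = 0"
          then have "0 \<in> range (\<lambda>n. 1 - (-u) / a n)" by (metis diff_minus_eq_add minus_divide_left rangeI)
          then have "\<phi> (-u) / c = 0" using has_prod_eq_0_iff[OF hp[of "-u"]] by blast
          then show False using False c by simp
        qed
        have "norm (\<phi> (-u) / c) < norm (\<phi> u / c)"
        proof (rule has_prod_less[OF _ h1 h2])
          show "norm (1 + u / a 0) < norm (1 - u / a 0)" using strict_factor an u by blast
          show "0 < norm (1 + u / a n)" for n using fnz[of n] by simp
          show "norm (1 + u / a n) \<le> norm (1 - u / a n)" for n
            using strict_factor[of "a n" u] an u by (simp add: less_imp_le)
        qed
        then show ?thesis using c by (simp add: norm_divide divide_less_cancel)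
      qed
    qed
  next
    case True
    obtain c where c: "c \<noteq> 0"
      and pf: "\<And>z. \<phi> z = c * (\<Prod>w\<in>{z. \<phi> z = 0}. (1 - z / w) ^ nat (zorder \<phi> w))"
      using hadamard_fin[OF hol nz \<sigma> growth True] by blast
    define Z where "Z = {z. \<phi> z = 0}"
    define m where "m = (\<lambda>w. nat (zorder \<phi> w))"
    show ?thesis
    proof (cases "Z = {}")
      case True
      then have "\<phi> z = c" for z using pf[of z] by (simp add: Z_def)
      then show ?thesis unfolding core_def by blast
    next
      case False
      then obtain w0 where w0: "w0 \<in> Z" by blast
      have mpos: "m w > 0" if "w \<in> Z" for w
        using zorder_pos_entire[OF hol nz] that by (auto simp: Z_def m_def)
      have finZ: "finite Z" using True by (simp add: Z_def)
      show ?thesis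
      proof (rule fromkey)
        fix u :: complex assume u: "Re u > 0"
        have fw: "norm (1 + u / w) < norm (1 - u / w)" if "w \<in> Z" for w
          using strict_factor[of w u] neg[of w] that u by (auto simp: Z_def)
        have "(\<Prod>w\<in>Z. norm (1 + u / w) ^ m w) < (\<Prod>w\<in>Z. norm (1 - u / w) ^ m w)"
        proof (rule prod_mono_strict[OF w0 _ finZ])
          show "norm (1 + u / w0) ^ m w0 < norm (1 - u / w0) ^ m w0"
            using fw[OF w0] mpos[OF w0] by (intro power_strict_mono) auto
          show "0 \<le> norm (1 + u / i) ^ m i \<and> norm (1 + u / i) ^ m i \<le> norm (1 - u / i) ^ m i"
            if "i \<in> Z" for i using fw[OF that] by (auto intro: power_mono)
          show "0 < norm (1 - u / i) ^ m i" if "i \<in> Z" for i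
            using fw[OF that] by (metis norm_ge_zero order_le_less_trans zero_less_power)
        qed
        moreover have "norm (\<phi> (-u)) = norm c * (\<Prod>w\<in>Z. norm (1 + u / w) ^ m w)"
          using pf[of "-u"] by (simp add: Z_def m_def norm_mult prod_norm[symmetric] norm_power)
        moreover have "norm (\<phi> u) = norm c * (\<Prod>w\<in>Z. norm (1 - u / w) ^ m w)"
          using pf[of u] by (simp add: Z_def m_def norm_mult prod_norm[symmetric] norm_power)
        ultimately show "norm (\<phi> (-u)) < norm (\<phi> u)" using c by simp
      qed
    qed
  qed
qed


theorem lemma2:
  fixes \<phi> :: "complex \<Rightarrow> complex" and a :: "nat \<Rightarrow> complex"
  assumes entire: "\<phi> holomorphic_on UNIV"
    and series: "\<And>z. (\<lambda>n. a n * z ^ n) sums \<phi> z"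
    and real_zeros: "\<And>z. \<phi> z = 0 \<Longrightarrow> z \<in> \<real>"
    and same_sign: "(\<forall>z. \<phi> z = 0 \<longrightarrow> Re z > 0) \<or> (\<forall>z. \<phi> z = 0 \<longrightarrow> Re z < 0)"
    and order: "0 \<le> entire_order \<phi>" "entire_order \<phi> < 1"
  shows "((\<forall>z. odd_part a z = 0 \<longrightarrow> Re z = 0) \<or> (\<forall>z. odd_part a z = 0))
       \<and> ((\<forall>z. even_part a z = 0 \<longrightarrow> Re z = 0) \<or> (\<forall>z. even_part a z = 0))"
proof -
  obtain \<sigma> C where \<sigma>: "0 < \<sigma>" "\<sigma> < 1" and growth: "\<And>z. norm (\<phi> z) \<le> exp (C + norm z powr \<sigma>)"
    using growth_from_order[OF entire order(2)] by blast
  have nz: "\<phi> 0 \<noteq> 0" using same_sign by force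
  have "core \<phi>"
    using same_sign
  proof
    assume pos: "\<forall>z. \<phi> z = 0 \<longrightarrow> Re z > 0"
    define \<psi> where "\<psi> = (\<lambda>z. \<phi> (-z))"
    have hol\<psi>: "\<psi> holomorphic_on UNIV"
      unfolding \<psi>_def
    proof -
      have "uminus holomorphic_on (UNIV :: complex set)"
        using holomorphic_on_minus[OF holomorphic_on_id[of UNIV]] by (simp add: id_def)
      then show "(\<lambda>z. \<phi> (-z)) holomorphic_on UNIV"
        using holomorphic_on_compose_gen[of uminus UNIV \<phi> UNIV] entire by (auto simp: o_def)
    qed
    have gr\<psi>: "norm (\<psi> z) \<le> exp (C + norm z powr \<sigma>)" for z
      using growth[of "-z"] by (simp add: \<psi>_def)
    have neg\<psi>: "z \<in> \<real> \<and> Re z < 0" if "\<psi> z = 0" for z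
    proof -
      have "\<phi> (-z) = 0" using that by (simp add: \<psi>_def)
      then have r: "-z \<in> \<real>" "Re (-z) > 0" using real_zeros[of "-z"] pos by blast+
      have "z = - (-z)" by simp
      then have "z \<in> \<real>" using r(1) Reals_minus by metis
      then show ?thesis using r(2) by simp
    qed
    have nz\<psi>: "\<psi> 0 \<noteq> 0" using nz by (simp add: \<psi>_def)
    have "core \<psi>" by (rule core_neg[OF hol\<psi> nz\<psi> \<sigma> gr\<psi> neg\<psi>])
    then show "core \<phi>" unfolding core_def[of \<psi>]
    proof
      assume H: "\<forall>z. Re z \<noteq> 0 \<longrightarrow> norm (\<psi> z) \<noteq> norm (\<psi> (-z))"
      have "norm (\<phi> z) \<noteq> norm (\<phi> (-z))" if "Re z \<noteq> 0" for z
        using H[rule_format, of z] that by (simp add: \<psi>_def)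
      then show ?thesis unfolding core_def by blast
    next
      assume "\<exists>c. \<forall>z. \<psi> z = c"
      then obtain c where "\<And>z. \<psi> z = c" by blast
      then have "\<phi> z = c" for z
      proof -
        have "\<psi> (-z) = c" by fact
        then show ?thesis by (simp add: \<psi>_def)
      qed
      then show ?thesis unfolding core_def by blast
    qed
  next
    assume negs: "\<forall>z. \<phi> z = 0 \<longrightarrow> Re z < 0"
    show "core \<phi>"
      by (rule core_neg[OF entire nz \<sigma> growth]) (use real_zeros negs in auto)
  qed
  then show ?thesis by (rule final_step[OF series _ nz])
qed


end
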